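(* Let $\lambda$ be a partition of $n$. Then $\mathcal{I}_\lambda=\mathcal{M}_\lambda+\mathcal{E}_\lambda+\mathcal{K}_\lambda$, where $\mathcal{M}_\lambda$ is the ideal generated by all square-free monomials of degree $n-\lambda_1+1$ in $x_1,\dots,x_n$; $\mathcal{E}_\lambda$ is the ideal generated by $e_1(x_1,\dots,x_n),\dots,e_{\ell(\lambda)-1}(x_1,\dots,x_n)$; $\mathcal{K}_\lambda$ is the ideal generated by the elements of the sets $e_r(m)$, where $n-1\ge m\ge n-\lambda_1+1$ and $r$ is an entry of the regular filling of $\lambda$ lying in the same column as the entry $m$ (namely column $n-m$, whose bottom cell contains $m$) and strictly above it.
   Context: $k$ is a field of characteristic $0$ and $R=k[x_1,\dots,x_n]$. For a set $S$ of variables, $e_r(S)$ is the $r$-th elementary symmetric polynomial in the variables of $S$ ($e_0=1$, and $e_r(S)=0$ if $r>|S|$). For $1\le m\le n$, $e_r(m)$ denotes the set $\{e_r(S): S\subseteq\{x_1,\dots,x_n\},\ |S|=m\}$. A partition $\lambda=(\lambda_1\ge\lambda_2\ge\cdots)$ of $n$ has length $\ell(\lambda)$ (number of nonzero parts) and conjugate $\lambda'$ with $\lambda'_i=\#\{j:\lambda_j\ge i\}$. The Young diagram of $\lambda$ is drawn with rows counted from the bottom: the bottom row has $\lambda_1$ cells, the next $\lambda_2$, etc., left-justified; columns are numbered $0,1,\dots,\lambda_1-1$ from left to right, and column $c$ has height $\lambda'_{c+1}$. For $1\le m\le n$ put $\delta_m(\lambda)=\lambda'_n+\cdots+\lambda'_{n-m+1}$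 (with $\lambda'_i=0$ for $i>\lambda_1$). The De Concini–Procesi ideal $\mathcal{I}_\lambda\subseteq R$ is the ideal generated by all elements of the sets $e_r(m)$ with $1\le m\le n$ and $m\ge r>m-\delta_m(\lambda)$. The regular filling of $\lambda$: for each column $c$, the bottom cell of column $c$ receives $n-c$, and the remaining $\lambda'_{c+1}-1$ cells of column $c$ receive, from top to bottom, the consecutive integers $1+\sum_{d<c}(\lambda'_{d+1}-1),\dots,\sum_{d\le c}(\lambda'_{d+1}-1)$. *)

theory Defs
  imports Main "HOL-Library.Poly_Mapping"
begin

text \<open>Polynomials: finitely supported maps from monomials (exponent vectors nat =>0 nat)
  to coefficients.  The variable x_(i+1) of the paper is var i (i < n).\<close>

type_synonym 'k mpoly = "(nat \<Rightarrow>\<^sub>0 nat) \<Rightarrow>\<^sub>0 'k"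

definition var :: "nat \<Rightarrow> 'k::comm_ring_1 mpoly" where
  "var i = Poly_Mapping.single (Poly_Mapping.single i 1) 1"

definition polyring :: "nat \<Rightarrow> 'k::comm_ring_1 mpoly set" where
  "polyring n = {p. \<forall>mon \<in> Poly_Mapping.keys p. Poly_Mapping.keys mon \<subseteq> {..<n}}"

definition ideal_gen :: "nat \<Rightarrow> 'k::comm_ring_1 mpoly set \<Rightarrow> 'k mpoly set" where
  "ideal_gen n G = {\<Sum>g\<in>F. c g * g | F c. finite F \<and> F \<subseteq> G \<and> (\<forall>g\<in>F. c g \<in> polyring n)}"

definition ideal_sum :: "'k::comm_ring_1 mpoly set \<Rightarrow> 'k mpoly set \<Rightarrow> 'k mpoly set" where
  "ideal_sum I J = {a + b | a b. a \<in> I \<and> b \<in> J}"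

definition esym :: "nat \<Rightarrow> nat set \<Rightarrow> 'k::comm_ring_1 mpoly" where
  "esym r S = (\<Sum>T \<in> {T. T \<subseteq> S \<and> card T = r}. \<Prod>i\<in>T. var i)"

definition esym_set :: "nat \<Rightarrow> nat \<Rightarrow> nat \<Rightarrow> 'k::comm_ring_1 mpoly set" where
  "esym_set n r m = {esym r S | S. S \<subseteq> {..<n} \<and> card S = m}"

text \<open>Partitions as weakly decreasing lists of positive parts; part i (1-based) is lam ! (i-1).\<close>
definition is_partition :: "nat \<Rightarrow> nat list \<Rightarrow> bool" where
  "is_partition n lam \<longleftrightarrow> sorted_wrt (\<ge>) lam \<and> 0 \<notin> set lam \<and> sum_list lam = n"

definition part :: "nat list \<Rightarrow> nat \<Rightarrow> nat" where
  "part lam i = (if 1 \<le> i \<and> i \<le> length lam then lam ! (i - 1) else 0)"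

definition conj :: "nat list \<Rightarrow> nat \<Rightarrow> nat" where
  "conj lam i = card {j. 1 \<le> j \<and> j \<le> length lam \<and> part lam j \<ge> i}"

definition delta :: "nat \<Rightarrow> nat list \<Rightarrow> nat \<Rightarrow> nat" where
  "delta n lam m = (\<Sum>i = n - m + 1..n. conj lam i)"

definition DP_ideal :: "nat \<Rightarrow> nat list \<Rightarrow> 'k::comm_ring_1 mpoly set" where
  "DP_ideal n lam = ideal_gen n (\<Union> {esym_set n r m | r m.
      1 \<le> m \<and> m \<le> n \<and> r \<le> m \<and> int r > int m - int (delta n lam m)})"

text \<open>Regular filling: entry of the cell in column c (0-based from the left) at height j
  (j = 0 is the bottom cell), for j < conj lam (c+1).\<close>
definition filling :: "nat \<Rightarrow> nat list \<Rightarrow> nat \<Rightarrow> nat \<Rightarrow> nat" where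
  "filling n lam c j = (if j = 0 then n - c
     else (\<Sum>d<c. conj lam (d + 1) - 1) + (conj lam (c + 1) - j))"

definition M_ideal :: "nat \<Rightarrow> nat list \<Rightarrow> 'k::comm_ring_1 mpoly set" where
  "M_ideal n lam = ideal_gen n {\<Prod>i\<in>S. var i | S. S \<subseteq> {..<n} \<and> card S = n - part lam 1 + 1}"

definition E_ideal :: "nat \<Rightarrow> nat list \<Rightarrow> 'k::comm_ring_1 mpoly set" where
  "E_ideal n lam = ideal_gen n {esym r {..<n} | r. 1 \<le> r \<and> r \<le> length lam - 1}"

definition K_ideal :: "nat \<Rightarrow> nat list \<Rightarrow> 'k::comm_ring_1 mpoly set" where
  "K_ideal n lam = ideal_gen n (\<Union> {esym_set n r m | r m.
      n - part lam 1 + 1 \<le> m \<and> m \<le> n - 1 \<and>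
      (\<exists>j. 0 < j \<and> j < conj lam (n - m + 1) \<and> r = filling n lam (n - m) j)})"

end

theory Submission
  imports Defs
begin


definition is_id :: "nat \<Rightarrow> 'k::comm_ring_1 mpoly set \<Rightarrow> bool" where
  "is_id n I \<longleftrightarrow> 0 \<in> I \<and> (\<forall>a\<in>I. \<forall>b\<in>I. a + b \<in> I) \<and> (\<forall>c\<in>polyring n. \<forall>a\<in>I. c * a \<in> I)"

lemma polyring_mult:
  assumes "p \<in> polyring n" "q \<in> polyring n" shows "p * q \<in> polyring n"
  unfolding polyring_def
proof (rule CollectI, rule ballI)
  fix mon assume "mon \<in> Poly_Mapping.keys (p * q)"
  then obtain a b where ab: "mon = a + b" "a \<in> Poly_Mapping.keys p" "b \<in> Poly_Mapping.keys q"
    using keys_mult by blast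
  have "Poly_Mapping.keys (a + b) \<subseteq> Poly_Mapping.keys a \<union> Poly_Mapping.keys b" by (rule keys_add)
  with ab assms show "Poly_Mapping.keys mon \<subseteq> {..<n}" unfolding polyring_def by blast
qed

lemma polyring_add:
  assumes "p \<in> polyring n" "q \<in> polyring n" shows "p + q \<in> polyring n"
  using assms keys_add[of p q] unfolding polyring_def by blast

lemma polyring_single0: "Poly_Mapping.single 0 a \<in> polyring n"
  unfolding polyring_def by auto

lemma polyring_one: "1 \<in> polyring n"
  unfolding polyring_def by auto

lemma polyring_var: "i < n \<Longrightarrow> var i \<in> polyring n"
  unfolding polyring_def var_def by auto

lemma polyring_prod: "finite S \<Longrightarrow> S \<subseteq> {..<n} \<Longrightarrow> (\<Prod>i\<in>S. var i) \<in> polyring n"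
  by (induction S rule: finite_induct) (auto intro: polyring_one polyring_mult polyring_var)

lemma is_id_sum:
  assumes "is_id n I" "finite A" "\<And>x. x \<in> A \<Longrightarrow> f x \<in> I"
  shows "sum f A \<in> I"
  using assms(2,3) by (induction A rule: finite_induct) (use assms(1) in \<open>auto simp: is_id_def\<close>)

lemma ideal_gen_is_id: "is_id n (ideal_gen n (G :: 'k::comm_ring_1 mpoly set))"
  unfolding is_id_def
proof (intro conjI ballI)
  show "0 \<in> ideal_gen n G" unfolding ideal_gen_def
    by (rule CollectI, rule exI[of _ "{}"], auto)
next
  fix a b assume "a \<in> ideal_gen n G" "b \<in> ideal_gen n G"
  then obtain F1 c1 F2 c2 where h: "a = (\<Sum>g\<in>F1. c1 g * g)" "finite F1" "F1 \<subseteq> G" "\<forall>g\<in>F1. c1 g \<in> polyring n"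
    "b = (\<Sum>g\<in>F2. c2 g * g)" "finite F2" "F2 \<subseteq> G" "\<forall>g\<in>F2. c2 g \<in> polyring n"
    unfolding ideal_gen_def by blast
  define c where "c g = (if g \<in> F1 then c1 g else 0) + (if g \<in> F2 then c2 g else 0)" for g
  have "(\<Sum>g\<in>F1 \<union> F2. c g * g) = (\<Sum>g\<in>F1 \<union> F2. (if g \<in> F1 then c1 g * g else 0)) + (\<Sum>g\<in>F1 \<union> F2. (if g \<in> F2 then c2 g * g else 0))"
    unfolding sum.distrib[symmetric] by (rule sum.cong) (auto simp: c_def distrib_right)
  also have "\<dots> = a + b"
  proof -
    have f: "finite (F1 \<union> F2)" using h by auto
    have "(\<Sum>g\<in>F1 \<union> F2. (if g \<in> F1 then c1 g * g else 0)) = (\<Sum>g\<in>(F1 \<union> F2) \<inter> F1. c1 g * g)"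
      by (rule sum.inter_restrict[OF f, symmetric])
    moreover have "(\<Sum>g\<in>F1 \<union> F2. (if g \<in> F2 then c2 g * g else 0)) = (\<Sum>g\<in>(F1 \<union> F2) \<inter> F2. c2 g * g)"
      by (rule sum.inter_restrict[OF f, symmetric])
    moreover have "(F1 \<union> F2) \<inter> F1 = F1" "(F1 \<union> F2) \<inter> F2 = F2" by auto
    ultimately show ?thesis using h by simp
  qed
  finally have "a + b = (\<Sum>g\<in>F1 \<union> F2. c g * g)" by simp
  moreover have "\<forall>g\<in>F1 \<union> F2. c g \<in> polyring n"
  proof
    fix g assume "g \<in> F1 \<union> F2"
    have z: "0 \<in> polyring n" unfolding polyring_def by simp
    show "c g \<in> polyring n" using h z unfolding c_def by (auto intro!: polyring_add)
  qed
  ultimately show "a + b \<in> ideal_gen n G" using h unfolding ideal_gen_def by blast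
next
  fix p :: "'k mpoly" and a assume p: "p \<in> polyring n" and "a \<in> ideal_gen n G"
  then obtain F c where h: "a = (\<Sum>g\<in>F. c g * g)" "finite F" "F \<subseteq> G" "\<forall>g\<in>F. c g \<in> polyring n"
    unfolding ideal_gen_def by blast
  have "p * a = (\<Sum>g\<in>F. (p * c g) * g)" using h by (simp add: sum_distrib_left mult.assoc)
  moreover have "\<forall>g\<in>F. p * c g \<in> polyring n" using h p by (auto intro: polyring_mult)
  ultimately have "\<exists>F' c'. p * a = (\<Sum>g\<in>F'. c' g * g) \<and> finite F' \<and> F' \<subseteq> G \<and> (\<forall>g\<in>F'. c' g \<in> polyring n)"
    using h by (intro exI[of _ F] exI[of _ "\<lambda>g. p * c g"]) simp
  then show "p * a \<in> ideal_gen n G" unfolding ideal_gen_def by blast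
qed

lemma ideal_gen_sub: "g \<in> G \<Longrightarrow> g \<in> ideal_gen n G"
  unfolding ideal_gen_def
  by (rule CollectI, rule exI[of _ "{g}"], rule exI[of _ "\<lambda>_. 1"], auto intro: polyring_one)

lemma ideal_gen_least:
  assumes "is_id n I" "G \<subseteq> I" shows "ideal_gen n G \<subseteq> I"
proof
  fix a assume "a \<in> ideal_gen n G"
  then obtain F c where h: "a = (\<Sum>g\<in>F. c g * g)" "finite F" "F \<subseteq> G" "\<forall>g\<in>F. c g \<in> polyring n"
    unfolding ideal_gen_def by blast
  show "a \<in> I" unfolding h(1)
    by (rule is_id_sum[OF assms(1) h(2)]) (use assms h in \<open>auto simp: is_id_def\<close>)
qed

lemma ideal_sum_is_id: fixes I J :: "'k::comm_ring_1 mpoly set" assumes "is_id n I" "is_id n J" shows "is_id n (ideal_sum I J)"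
  unfolding is_id_def
proof (intro conjI ballI)
  show "0 \<in> ideal_sum I J" using assms unfolding is_id_def ideal_sum_def by force
next
  fix x y assume "x \<in> ideal_sum I J" "y \<in> ideal_sum I J"
  then obtain a1 b1 a2 b2 where h: "x = a1 + b1" "a1 \<in> I" "b1 \<in> J" "y = a2 + b2" "a2 \<in> I" "b2 \<in> J"
    unfolding ideal_sum_def by blast
  have "x + y = (a1 + a2) + (b1 + b2)" using h by (simp add: algebra_simps)
  moreover have "a1 + a2 \<in> I" "b1 + b2 \<in> J" using h assms unfolding is_id_def by auto
  ultimately show "x + y \<in> ideal_sum I J" unfolding ideal_sum_def by blast
next
  fix c :: "'k mpoly" and x assume c: "c \<in> polyring n" and "x \<in> ideal_sum I J"
  then obtain a1 b1 where h: "x = a1 + b1" "a1 \<in> I" "b1 \<in> J"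
    unfolding ideal_sum_def by blast
  have "c * x = c * a1 + c * b1" using h by (simp add: algebra_simps)
  moreover have "c * a1 \<in> I" "c * b1 \<in> J" using h assms c unfolding is_id_def by auto
  ultimately show "c * x \<in> ideal_sum I J" unfolding ideal_sum_def by blast
qed

lemma ideal_sum_left: "is_id n J \<Longrightarrow> I \<subseteq> ideal_sum I J"
  unfolding is_id_def ideal_sum_def by force

lemma ideal_sum_right: "is_id n I \<Longrightarrow> J \<subseteq> ideal_sum I J"
  unfolding is_id_def ideal_sum_def by force

lemma ideal_sum_least: "is_id n K \<Longrightarrow> I \<subseteq> K \<Longrightarrow> J \<subseteq> K \<Longrightarrow> ideal_sum I J \<subseteq> K"
  unfolding is_id_def ideal_sum_def by blast

lemma esym_card:
  assumes "finite S" shows "esym (card S) S = (\<Prod>i\<in>S. var i)"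
proof -
  have "{T. T \<subseteq> S \<and> card T = card S} = {S}"
    using assms card_subset_eq by auto
  then show ?thesis unfolding esym_def by simp
qed

lemma esym_avg:
  assumes "finite S"
  shows "(\<Sum>x\<in>S. (esym r (S - {x}) :: 'k::comm_ring_1 mpoly)) = of_nat (card S - r) * esym r S"
proof -
  define A where "A = {T. T \<subseteq> S \<and> card T = r}"
  define P :: "nat set \<Rightarrow> 'k mpoly" where "P T = (\<Prod>i\<in>T. var i)" for T
  have "A \<subseteq> Pow S" unfolding A_def by blast
  then have fA: "finite A" by (rule finite_subset) (simp add: assms)
  have "(\<Sum>x\<in>S. esym r (S - {x})) = (\<Sum>x\<in>S. \<Sum>T\<in>A. if x \<in> - T then P T else 0)"
  proof (rule sum.cong[OF refl])
    fix x assume "x \<in> S"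
    have eq: "A \<inter> {T. x \<notin> T} = {T. T \<subseteq> S - {x} \<and> card T = r}" unfolding A_def by blast
    have "esym r (S - {x}) = (\<Sum>T\<in>A \<inter> {T. x \<notin> T}. P T)"
      unfolding esym_def P_def eq ..
    also have "\<dots> = (\<Sum>T\<in>A. if T \<in> {T. x \<notin> T} then P T else 0)"
      by (rule sum.inter_restrict[OF fA])
    also have "\<dots> = (\<Sum>T\<in>A. if x \<in> - T then P T else 0)"
      by (rule sum.cong[OF refl]) simp
    finally show "esym r (S - {x}) = (\<Sum>T\<in>A. if x \<in> - T then P T else 0)" .
  qed
  also have "\<dots> = (\<Sum>T\<in>A. \<Sum>x\<in>S. if x \<in> - T then P T else 0)"
    by (rule sum.swap)
  also have "\<dots> = (\<Sum>T\<in>A. of_nat (card S - r) * P T)"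
  proof (rule sum.cong[OF refl])
    fix T assume T: "T \<in> A"
    have "(\<Sum>x\<in>S. if x \<in> - T then P T else 0) = (\<Sum>x\<in>S \<inter> - T. P T)"
      by (rule sum.inter_restrict[OF assms, symmetric])
    also have "\<dots> = of_nat (card (S \<inter> - T)) * P T" by (rule sum_constant)
    also have "card (S \<inter> - T) = card S - r"
    proof -
      have Ts: "T \<subseteq> S" "card T = r" using T unfolding A_def by auto
      have fT: "finite T" by (rule finite_subset[OF Ts(1) assms])
      have "S \<inter> - T = S - T" by blast
      then show ?thesis using card_Diff_subset[OF fT Ts(1)] Ts(2) by simp
    qed
    finally show "(\<Sum>x\<in>S. if x \<in> - T then P T else 0) = of_nat (card S - r) * P T" .
  qed
  also have "\<dots> = of_nat (card S - r) * (\<Sum>T\<in>A. P T)"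
    by (rule sum_distrib_left[symmetric])
  also have "(\<Sum>T\<in>A. P T) = esym r S"
    unfolding esym_def A_def P_def ..
  finally show ?thesis .
qed



locale partn =
  fixes n :: nat and lam :: "nat list"
  assumes P: "is_partition n lam" and n1: "1 \<le> n"
begin

abbreviation "L \<equiv> part lam 1"

lemma lam_ne: "lam \<noteq> []" using P n1 unfolding is_partition_def by auto

lemma part_le_L: "1 \<le> j \<Longrightarrow> j \<le> length lam \<Longrightarrow> part lam j \<le> L"
proof -
  assume j: "1 \<le> j" "j \<le> length lam"
  show ?thesis
  proof (cases "j = 1")
    case False
    then have "lam ! (j-1) \<le> lam ! 0" using P j sorted_wrt_nth_less[of "(\<ge>)" lam 0 "j-1"]
      unfolding is_partition_def by auto
    then show ?thesis using j lam_ne unfolding part_def by (simp add: Suc_leI)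
  qed simp
qed

lemma part_pos: "1 \<le> j \<Longrightarrow> j \<le> length lam \<Longrightarrow> 1 \<le> part lam j"
proof -
  assume j: "1 \<le> j" "j \<le> length lam"
  have "lam ! (j-1) \<in> set lam" using j by auto
  moreover have "0 \<notin> set lam" using P unfolding is_partition_def by simp
  ultimately have "lam ! (j-1) \<noteq> 0" by metis
  moreover have "part lam j = lam ! (j-1)" using j unfolding part_def by simp
  ultimately show ?thesis by simp
qed

lemma part_le_n: "part lam j \<le> n"
  using P unfolding part_def is_partition_def by (auto intro: elem_le_sum_list)

lemma L_pos: "1 \<le> L" using part_pos[of 1] lam_ne by (simp add: Suc_leI)
lemma L_le: "L \<le> n" by (rule part_le_n)

lemma conj_fin: "finite {j. 1 \<le> j \<and> j \<le> length lam \<and> part lam j \<ge> i}"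
  by (rule finite_subset[of _ "{1..length lam}"]) auto

lemma conj_pos: "i \<le> L \<Longrightarrow> 1 \<le> conj lam i"
proof -
  assume "i \<le> L"
  then have "1 \<in> {j. 1 \<le> j \<and> j \<le> length lam \<and> part lam j \<ge> i}" using lam_ne by (simp add: Suc_leI)
  then have "{j. 1 \<le> j \<and> j \<le> length lam \<and> part lam j \<ge> i} \<noteq> {}" by blast
  then have "card {j. 1 \<le> j \<and> j \<le> length lam \<and> part lam j \<ge> i} > 0"
    using conj_fin[of i] by (simp add: card_gt_0_iff)
  then show ?thesis unfolding conj_def by simp
qed

lemma conj_zero: "L < i \<Longrightarrow> conj lam i = 0"
proof -
  assume i: "L < i"
  have "{j. 1 \<le> j \<and> j \<le> length lam \<and> part lam j \<ge> i} = {}"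
  proof -
    have "\<not> (1 \<le> j \<and> j \<le> length lam \<and> part lam j \<ge> i)" for j
    proof
      assume "1 \<le> j \<and> j \<le> length lam \<and> part lam j \<ge> i"
      then have "part lam j \<le> L" "part lam j \<ge> i" using part_le_L by auto
      then show False using i by simp
    qed
    then show ?thesis by blast
  qed
  then show ?thesis unfolding conj_def by simp
qed

lemma conj_pos_le: "1 \<le> conj lam i \<Longrightarrow> i \<le> L"
  using conj_zero by (metis not_le not_one_le_zero)

lemma conj_one: "conj lam 1 = length lam"
proof -
  have "{j. 1 \<le> j \<and> j \<le> length lam \<and> part lam j \<ge> 1} = {1..length lam}" using part_pos by auto
  then show ?thesis unfolding conj_def by simp
qed

lemma sum_conj: "(\<Sum>i=1..n. conj lam i) = n"
proof -
  have "(\<Sum>i=1..n. conj lam i) = (\<Sum>i\<in>{1..n}. \<Sum>j\<in>{1..length lam}. if i \<le> part lam j then 1 else 0)"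
  proof (rule sum.cong[OF refl])
    fix i
    have "conj lam i = card ({1..length lam} \<inter> {j. i \<le> part lam j})" unfolding conj_def
      by (rule arg_cong[where f=card]) auto
    also have "\<dots> = (\<Sum>j\<in>{1..length lam} \<inter> {j. i \<le> part lam j}. 1)" by simp
    also have "\<dots> = (\<Sum>j\<in>{1..length lam}. if j \<in> {j. i \<le> part lam j} then 1 else 0)"
      by (rule sum.inter_restrict) simp
    finally show "conj lam i = (\<Sum>j\<in>{1..length lam}. if i \<le> part lam j then 1 else 0)" by simp
  qed
  also have "\<dots> = (\<Sum>j\<in>{1..length lam}. \<Sum>i\<in>{1..n}. if i \<le> part lam j then 1 else 0)"
    by (rule sum.swap)
  also have "\<dots> = (\<Sum>j\<in>{1..length lam}. part lam j)"
  proof (rule sum.cong[OF refl])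
    fix j
    have "(\<Sum>i\<in>{1..n}. if i \<in> {i. i \<le> part lam j} then 1 else 0) = (\<Sum>i\<in>{1..n} \<inter> {i. i \<le> part lam j}. (1::nat))"
      by (rule sum.inter_restrict[symmetric]) simp
    also have "{1..n} \<inter> {i. i \<le> part lam j} = {1..part lam j}" using part_le_n[of j] by auto
    finally show "(\<Sum>i\<in>{1..n}. if i \<le> part lam j then 1 else 0) = part lam j" by simp
  qed
  also have "\<dots> = (\<Sum>j<length lam. lam ! j)"
    unfolding sum.atLeast1_atMost_eq[where g="part lam", simplified One_nat_def[symmetric]]
    by (rule sum.cong) (auto simp: part_def)
  also have "\<dots> = n" using P unfolding is_partition_def by (simp add: sum_list_sum_nth atLeast0LessThan)
  finally show ?thesis .
qed

lemma D3: "1 \<le> m \<Longrightarrow> m \<le> n \<Longrightarrow> delta n lam m = delta n lam (m-1) + conj lam (n-m+1)"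
proof -
  assume m: "1 \<le> m" "m \<le> n"
  have "delta n lam m = conj lam (n-m+1) + (\<Sum>i = Suc (n-m+1)..n. conj lam i)"
    unfolding delta_def by (rule sum.atLeast_Suc_atMost) (use m in auto)
  moreover have "Suc (n-m+1) = n - (m-1) + 1" using m by auto
  ultimately show ?thesis unfolding delta_def by simp
qed

lemma D0: "delta n lam 0 = 0" unfolding delta_def by simp

lemma Dn: "delta n lam n = n" unfolding delta_def using sum_conj by simp

lemma Dsplit: "m \<le> n \<Longrightarrow> delta n lam m + (\<Sum>i=1..n-m. conj lam i) = n"
proof (induction m)
  case 0 then show ?case using D0 sum_conj by simp
next
  case (Suc m)
  have "n - m = Suc (n - Suc m)" using Suc.prems by auto
  then have "(\<Sum>i=1..n-m. conj lam i) = (\<Sum>i=1..n - Suc m. conj lam i) + conj lam (n - Suc m + 1)"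
    by simp
  moreover have "delta n lam (Suc m) = delta n lam m + conj lam (n - Suc m + 1)"
    using D3[of "Suc m"] Suc.prems by simp
  ultimately show ?case using Suc by simp
qed

lemma sum_ge: "c \<le> L \<Longrightarrow> c \<le> (\<Sum>i=1..c. conj lam i)"
proof -
  assume c: "c \<le> L"
  have "(\<Sum>i=1..c. (1::nat)) \<le> (\<Sum>i=1..c. conj lam i)"
    by (rule sum_mono) (use c conj_pos in auto)
  then show ?thesis by simp
qed

lemma D_zero: "m \<le> n \<Longrightarrow> L \<le> n - m \<Longrightarrow> delta n lam m = 0"
  unfolding delta_def by (auto intro!: sum.neutral conj_zero)

lemma F1: "m \<le> n \<Longrightarrow> delta n lam m \<le> m"
proof -
  assume m: "m \<le> n"
  show ?thesis
  proof (cases "L \<le> n - m")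
    case True then show ?thesis using D_zero m by simp
  next
    case False
    then have "n - m \<le> (\<Sum>i=1..n-m. conj lam i)" using sum_ge by simp
    then show ?thesis using Dsplit[OF m] m by linarith
  qed
qed

lemma F2: "m \<le> n \<Longrightarrow> 1 \<le> delta n lam m \<Longrightarrow> n - m + 1 \<le> L"
  using D_zero by fastforce

lemma F5: "m \<le> n \<Longrightarrow> n - m \<le> L \<Longrightarrow> (\<Sum>d<n-m. conj lam (d+1) - 1) + delta n lam m = m"
proof -
  assume m: "m \<le> n" "n - m \<le> L"
  define c where "c = n - m"
  have "(\<Sum>d<c. (conj lam (d+1) - 1) + 1) = (\<Sum>d<c. conj lam (d+1))"
  proof (rule sum.cong[OF refl])
    fix d assume "d \<in> {..<c}"
    then have "d + 1 \<le> L" using m unfolding c_def by auto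
    then have "1 \<le> conj lam (d+1)" by (rule conj_pos)
    then show "conj lam (d+1) - 1 + 1 = conj lam (d+1)" by simp
  qed
  moreover have "(\<Sum>d<c. (conj lam (d+1) - 1) + 1) = (\<Sum>d<c. conj lam (d+1) - 1) + (\<Sum>d<c. (1::nat))"
    by (rule sum.distrib)
  moreover have "(\<Sum>d<c. (1::nat)) = c" by simp
  ultimately have "(\<Sum>d<c. conj lam (d+1) - 1) + c = (\<Sum>d<c. conj lam (d+1))"
    by linarith
  also have "\<dots> = (\<Sum>i=1..c. conj lam i)"
    using sum.atLeast1_atMost_eq[where g="conj lam" and n=c] by simp
  finally show ?thesis using Dsplit[OF m(1)] m unfolding c_def by linarith
qed

end



lemma UnionI2: "x \<in> f a b \<Longrightarrow> P a b \<Longrightarrow> x \<in> \<Union>{f r m | r m. P r m}" by blast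

lemma esym_setI: "S \<subseteq> {..<n} \<Longrightarrow> card S = m \<Longrightarrow> esym r S \<in> esym_set n r m"
  unfolding esym_set_def by blast

lemma const_inv:
  assumes "k > 0"
  shows "Poly_Mapping.single 0 (inverse (of_nat k :: 'k::field_char_0)) * (of_nat k :: 'k mpoly) = 1"
proof -
  have "(of_nat k :: 'k mpoly) = Poly_Mapping.single 0 (of_nat k)" by (simp only: single_of_nat)
  then have "Poly_Mapping.single 0 (inverse (of_nat k :: 'k)) * (of_nat k :: 'k mpoly)
      = Poly_Mapping.single (0 + 0) (inverse (of_nat k :: 'k) * of_nat k)"
    by (simp only: mult_single)
  also have "inverse (of_nat k :: 'k) * of_nat k = 1" using assms by simp
  finally show ?thesis by simp
qed

theorem mainTheorem4:
  fixes n :: nat and lam :: "nat list"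
  assumes "1 \<le> n" and "is_partition n lam"
  shows "(DP_ideal n lam :: 'k::field_char_0 mpoly set)
           = ideal_sum (ideal_sum (M_ideal n lam) (E_ideal n lam)) (K_ideal n lam)"
proof -
  interpret partn n lam using assms by unfold_locales
  define J :: "'k mpoly set" where "J = ideal_sum (ideal_sum (M_ideal n lam) (E_ideal n lam)) (K_ideal n lam)"
  have idM: "is_id n (M_ideal n lam :: 'k mpoly set)" unfolding M_ideal_def by (rule ideal_gen_is_id)
  have idE: "is_id n (E_ideal n lam :: 'k mpoly set)" unfolding E_ideal_def by (rule ideal_gen_is_id)
  have idK: "is_id n (K_ideal n lam :: 'k mpoly set)" unfolding K_ideal_def by (rule ideal_gen_is_id)
  have idME: "is_id n (ideal_sum (M_ideal n lam) (E_ideal n lam) :: 'k mpoly set)"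
    by (rule ideal_sum_is_id[OF idM idE])
  have idJ: "is_id n J" unfolding J_def by (rule ideal_sum_is_id[OF idME idK])
  have MJ: "M_ideal n lam \<subseteq> J" unfolding J_def
    using ideal_sum_left[OF idE, of "M_ideal n lam"] ideal_sum_left[OF idK, of "ideal_sum (M_ideal n lam) (E_ideal n lam)"] by blast
  have EJ: "E_ideal n lam \<subseteq> J" unfolding J_def
    using ideal_sum_right[OF idM, of "E_ideal n lam"] ideal_sum_left[OF idK, of "ideal_sum (M_ideal n lam) (E_ideal n lam)"] by blast
  have KJ: "K_ideal n lam \<subseteq> J" unfolding J_def
    using ideal_sum_right[OF idME, of "K_ideal n lam"] by blast
  have idDP: "is_id n (DP_ideal n lam :: 'k mpoly set)" unfolding DP_ideal_def by (rule ideal_gen_is_id)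
  have fill: "filling n lam c j = (\<Sum>d<c. conj lam (d + 1) - 1) + (conj lam (c + 1) - j)" if "j \<noteq> 0" for c j
    using that unfolding filling_def by simp

  have claim: "\<forall>r S. r \<le> m \<longrightarrow> int r > int m - int (delta n lam m) \<longrightarrow> S \<subseteq> {..<n} \<longrightarrow> card S = m
      \<longrightarrow> esym r S \<in> J" if "m \<le> n" for m
    using that
  proof (induction m)
    case 0 then show ?case using D0 by auto
  next
    case (Suc m)
    show ?case
    proof (intro allI impI)
      fix r S assume r: "r \<le> Suc m" "int r > int (Suc m) - int (delta n lam (Suc m))"
        and S: "S \<subseteq> {..<n}" "card S = Suc m"
      have finS: "finite S" using finite_subset[OF S(1) finite_lessThan] .
      have Dle: "delta n lam (Suc m) \<le> Suc m" using F1 Suc.prems by blast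
      have Dlem: "delta n lam m \<le> m" using F1 Suc.prems by simp
      have D3': "delta n lam (Suc m) = delta n lam m + conj lam (n - Suc m + 1)"
        using D3[of "Suc m"] Suc.prems by simp
      consider "r = Suc m" | "r < Suc m" "int r > int m - int (delta n lam m)"
        | "r < Suc m" "int r \<le> int m - int (delta n lam m)" using r by linarith
      then show "esym r S \<in> J"
      proof cases
        case 1
        then have "1 \<le> delta n lam (Suc m)" using r by linarith
        then have "n - Suc m + 1 \<le> L" using F2 Suc.prems by blast
        then have "n - L + 1 \<le> card S" using S L_le Suc.prems by linarith
        then obtain T where T: "T \<subseteq> S" "card T = n - L + 1" "finite T"
          by (rule obtain_subset_with_card_n)
        have "esym r S = (\<Prod>i\<in>S. var i)" using esym_card[OF finS] 1 S by simp
        also have "\<dots> = (\<Prod>i\<in>S - T. var i) * (\<Prod>i\<in>T. var i)"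
          by (rule prod.subset_diff[OF T(1) finS])
        finally have eq: "esym r S = (\<Prod>i\<in>S - T. var i) * (\<Prod>i\<in>T. var i)" .
        have "(\<Prod>i\<in>T. var i) \<in> M_ideal n lam" unfolding M_ideal_def
          by (rule ideal_gen_sub) (use T S in blast)
        then have "(\<Prod>i\<in>T. var i) \<in> J" using MJ by blast
        moreover have "(\<Prod>i\<in>S - T. var i) \<in> polyring n" using finS S by (intro polyring_prod) auto
        ultimately show ?thesis unfolding eq using idJ unfolding is_id_def by blast
      next
        case 2
        have m1: "1 \<le> m"
        proof (rule ccontr)
          assume "\<not> 1 \<le> m"
          then have "m = 0" by simp
          then show False using 2 D0 by simp
        qed
        have IH: "esym r (S - {x}) \<in> J" if "x \<in> S" for x
          using Suc.IH[rule_format, of r "S - {x}"] Suc.prems 2 S that finS by auto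
        have sumJ: "(\<Sum>x\<in>S. esym r (S - {x})) \<in> J" by (rule is_id_sum[OF idJ finS IH])
        define k where "k = Suc m - r"
        have k: "k > 0" using 2 unfolding k_def by simp
        have "(\<Sum>x\<in>S. esym r (S - {x})) = of_nat k * (esym r S :: 'k mpoly)"
          using esym_avg[OF finS, of r] S unfolding k_def by simp
        then have "Poly_Mapping.single 0 (inverse (of_nat k)) * (\<Sum>x\<in>S. esym r (S - {x}))
            = (Poly_Mapping.single 0 (inverse (of_nat k)) * of_nat k) * (esym r S :: 'k mpoly)"
          by (simp only: mult.assoc)
        also have "\<dots> = esym r S" by (simp only: const_inv[OF k] mult_1_left)
        finally have "Poly_Mapping.single 0 (inverse (of_nat k)) * (\<Sum>x\<in>S. esym r (S - {x})) = (esym r S :: 'k mpoly)" .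
        moreover have "Poly_Mapping.single 0 (inverse (of_nat k)) * (\<Sum>x\<in>S. esym r (S - {x})) \<in> J"
          using idJ sumJ polyring_single0 unfolding is_id_def by blast
        ultimately show ?thesis by simp
      next
        case 3
        have c2: "conj lam (n - Suc m + 1) \<ge> 2" using 3 r D3' by linarith
        then have cL: "n - Suc m + 1 \<le> L" using conj_pos_le by simp
        show ?thesis
        proof (cases "Suc m = n")
          case True
          have Sn: "S = {..<n}" using S True by (simp add: card_subset_eq)
          have "delta n lam (Suc m) = n" using True Dn by simp
          then have r1: "1 \<le> r" using r True by linarith
          have "conj lam (n - Suc m + 1) = length lam" using True conj_one by simp
          then have r2: "r \<le> length lam - 1" using 3 D3' \<open>delta n lam (Suc m) = n\<close> True by linarith
          have "esym r S \<in> E_ideal n lam" unfolding E_ideal_def Sn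
            by (rule ideal_gen_sub) (use r1 r2 in blast)
          then show ?thesis using EJ by blast
        next
          case False
          define c where "c = n - Suc m"
          have F5': "(\<Sum>d<c. conj lam (d+1) - 1) + delta n lam (Suc m) = Suc m"
            unfolding c_def by (rule F5) (use Suc.prems cL in auto)
          define s where "s = (\<Sum>d<c. conj lam (d+1) - 1)"
          define j where "j = s + conj lam (c + 1) - r"
          have j1: "0 < j" "j < conj lam (c + 1)"
            using F5' 3 r D3' unfolding j_def s_def c_def by linarith+
          have fj: "filling n lam c j = r" using fill[of j c] j1 F5' 3 r D3'
            unfolding j_def s_def c_def by simp
          have "esym r S \<in> esym_set n r (Suc m)" unfolding esym_set_def using S by blast
          moreover have "n - L + 1 \<le> Suc m" "Suc m \<le> n - 1" using cL False Suc.prems by auto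
          ultimately have "esym r S \<in> K_ideal n lam" unfolding K_ideal_def
            apply (intro ideal_gen_sub)
            apply (rule UnionI2[where a=r and b="Suc m"], assumption)
            using j1 fj unfolding c_def by (intro conjI exI[of _ j]) auto
          then show ?thesis using KJ by blast
        qed
      qed
    qed
  qed

  have "DP_ideal n lam \<subseteq> J" unfolding DP_ideal_def
  proof (rule ideal_gen_least[OF idJ])
    show "\<Union> {(esym_set n r m :: 'k mpoly set) | r m. 1 \<le> m \<and> m \<le> n \<and> r \<le> m \<and> int r > int m - int (delta n lam m)} \<subseteq> J"
    proof
      fix x :: "'k mpoly" assume "x \<in> \<Union> {esym_set n r m | r m. 1 \<le> m \<and> m \<le> n \<and> r \<le> m \<and> int r > int m - int (delta n lam m)}"
      then obtain r m where rm: "x \<in> esym_set n r m" "m \<le> n" "r \<le> m" "int r > int m - int (delta n lam m)"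
        by blast
      then obtain S where "x = esym r S" "S \<subseteq> {..<n}" "card S = m" unfolding esym_set_def by blast
      then show "x \<in> J" using claim[OF rm(2)] rm by blast
    qed
  qed
  moreover have "J \<subseteq> DP_ideal n lam"
    unfolding J_def
  proof (intro ideal_sum_least[OF idDP])
    show "(M_ideal n lam :: 'k mpoly set) \<subseteq> DP_ideal n lam" unfolding M_ideal_def
    proof (rule ideal_gen_least[OF idDP], rule subsetI)
      fix g :: "'k mpoly" assume "g \<in> {\<Prod>i\<in>S. var i | S. S \<subseteq> {..<n} \<and> card S = n - L + 1}"
      then obtain S where S: "g = (\<Prod>i\<in>S. var i)" "S \<subseteq> {..<n}" "card S = n - L + 1" by blast
      have finS: "finite S" using finite_subset[OF S(2) finite_lessThan] .
      define m0 where "m0 = n - L + 1"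
      have m0: "1 \<le> m0" "m0 \<le> n" using L_pos L_le unfolding m0_def by auto
      have "delta n lam m0 = delta n lam (m0 - 1) + conj lam (n - m0 + 1)" by (rule D3[OF m0])
      moreover have "n - m0 + 1 = L" using L_pos L_le unfolding m0_def by auto
      ultimately have "delta n lam m0 \<ge> 1" using conj_pos[of L] by simp
      moreover have "(esym (card S) S :: 'k mpoly) = (\<Prod>i\<in>S. var i)" by (rule esym_card[OF finS])
      then have "g = esym m0 S" using S unfolding m0_def by simp
      ultimately have "g \<in> esym_set n m0 m0" "int m0 > int m0 - int (delta n lam m0)"
        unfolding esym_set_def using S unfolding m0_def by auto
      then show "g \<in> DP_ideal n lam" unfolding DP_ideal_def using m0
        by (intro ideal_gen_sub UnionI2[where a=m0 and b=m0]) auto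
    qed
  next
    show "(E_ideal n lam :: 'k mpoly set) \<subseteq> DP_ideal n lam" unfolding E_ideal_def
    proof (rule ideal_gen_least[OF idDP], rule subsetI)
      fix g :: "'k mpoly" assume "g \<in> {esym r {..<n} | r. 1 \<le> r \<and> r \<le> length lam - 1}"
      then obtain r where g: "g = esym r {..<n}" "1 \<le> r" "r \<le> length lam - 1" by blast
      have "delta n lam n = delta n lam (n - 1) + conj lam (n - n + 1)" by (rule D3) (use assms in auto)
      then have "length lam \<le> n" using Dn conj_one by simp
      then have "g \<in> esym_set n r n" "int r > int n - int (delta n lam n)" "r \<le> n"
        unfolding esym_set_def using g Dn by auto
      then show "g \<in> DP_ideal n lam" unfolding DP_ideal_def using assms(1)
        by (intro ideal_gen_sub UnionI2[where a=r and b=n]) auto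
    qed
  next
    show "(K_ideal n lam :: 'k mpoly set) \<subseteq> DP_ideal n lam" unfolding K_ideal_def
    proof (rule ideal_gen_least[OF idDP], rule subsetI)
      fix g :: "'k mpoly" assume "g \<in> \<Union> {esym_set n r m | r m. n - L + 1 \<le> m \<and> m \<le> n - 1 \<and>
        (\<exists>j. 0 < j \<and> j < conj lam (n - m + 1) \<and> r = filling n lam (n - m) j)}"
      then obtain r m where g: "g \<in> esym_set n r m" and m: "n - L + 1 \<le> m" "m \<le> n - 1"
        and "\<exists>j. 0 < j \<and> j < conj lam (n - m + 1) \<and> r = filling n lam (n - m) j" by blast
      then obtain j where j: "0 < j" "j < conj lam (n - m + 1)" "r = filling n lam (n - m) j" by blast
      have m1: "1 \<le> m" "m \<le> n" using m L_le by auto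
      have cL: "n - m + 1 \<le> L" using conj_pos_le j by simp
      have F5': "(\<Sum>d<n-m. conj lam (d+1) - 1) + delta n lam m = m"
        by (rule F5) (use m1 cL in auto)
      have D3': "delta n lam m = delta n lam (m - 1) + conj lam (n - m + 1)" by (rule D3[OF m1])
      have r: "r = (\<Sum>d<n-m. conj lam (d+1) - 1) + (conj lam (n - m + 1) - j)"
        using fill[of j "n-m"] j by simp
      have "r \<le> m" "int r > int m - int (delta n lam m)" using r F5' D3' j by linarith+
      then show "g \<in> DP_ideal n lam" unfolding DP_ideal_def using g m1
        by (intro ideal_gen_sub UnionI2[where a=r and b=m]) auto
    qed
  qed
  ultimately show ?thesis unfolding J_def by blast
qed

end
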